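(* Let $q\in\mathbb R$ and let $\mu$ be a compactly supported Borel probability measure on $\mathbb R^n$ satisfying the doubling condition. Then for every $E\subseteq\operatorname{supp}\mu$, $\mathsf B^q_\mu(E)=\operatorname{Dim}^q_\mu(E)$.
   Context: $B(x,r)$ is the closed ball. $\mu$ satisfies the doubling condition if $\limsup_{r\searrow0}\sup_{x\in\operatorname{supp}\mu}\mu(B(x,2r))/\mu(B(x,r))<\infty$. Hewitt–Stromberg side: a centred packing of $E$ by $r$-balls is a family $(B(x_i,r))_i$ of pairwise disjoint closed balls with $x_i\in E$; $M^q_{\mu,r}(E)=\sup\sum_i\mu(B(x_i,r))^q$ over such packings; $\mathsf C^{q,t}_\mu(E)=\limsup_{r\to0}M^q_{\mu,r}(E)(2r)^t$; $\mathsf P^{q,t}_\mu(E)=\inf\{\sum_i\mathsf C^{q,t}_\mu(E_i):E\subseteq\bigcup_iE_i,\ E_i\text{ bounded}\}$; $\mathsf B^q_\mu(E)$ is the unique $t$ with $\mathsf P^{q,s}_\mu(E)=\infty$ for $s<t$ and $=0$ for $s>t$. Olsen's multifractal packing side: a centred $\delta$-packing of $E$ is a family $(B(x_i,r_i))_i$ of pairwise disjoint closed balls with $x_i\in E$ and $r_i\le\delta$; $\overline{\mathcal P}^{q,t}_\mu(E)=\inf_{\delta>0}\sup\sum_i\mu(B(x_i,r_i))^q(2r_i)^t$ (sup over centred $\delta$-packings of $E$); $\mathcal P^{q,t}_\mu(E)=\inf\{\sum_i\overline{\mathcal P}^{q,t}_\mu(E_i):E\subseteq\bigcup_iE_i\}$;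 $\operatorname{Dim}^q_\mu(E)=\inf\{t:\mathcal P^{q,t}_\mu(E)=0\}=\sup\{t:\mathcal P^{q,t}_\mu(E)=\infty\}$. *)

theory Defs
  imports "HOL-Analysis.Analysis" "HOL-Probability.Probability_Measure"
begin

definition msupp :: "'a::metric_space measure \<Rightarrow> 'a set" where
  "msupp M = {x. \<forall>e>0. 0 < measure M (ball x e)}"

definition doubling :: "'a::metric_space measure \<Rightarrow> bool" where
  "doubling M \<longleftrightarrow>
     Limsup (at_right (0::real))
       (\<lambda>r. SUP x\<in>msupp M. ereal (measure M (cball x (2*r)) / measure M (cball x r))) < \<infinity>"

definition centred_r_packings :: "'a::metric_space set \<Rightarrow> real \<Rightarrow> 'a set set" where
  "centred_r_packings E r =
     {S. S \<subseteq> E \<and> (\<forall>x\<in>S. \<forall>y\<in>S. x \<noteq> y \<longrightarrow> cball x r \<inter> cball y r = {})}"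

definition HS_M :: "'a::metric_space measure \<Rightarrow> real \<Rightarrow> real \<Rightarrow> 'a set \<Rightarrow> ennreal" where
  "HS_M M q r E = (SUP S\<in>centred_r_packings E r.
       (\<Sum>\<^sub>\<infinity>x\<in>S. ennreal (measure M (cball x r) powr q)))"

definition HS_C :: "'a::metric_space measure \<Rightarrow> real \<Rightarrow> real \<Rightarrow> 'a set \<Rightarrow> ennreal" where
  "HS_C M q t E = Limsup (at_right (0::real)) (\<lambda>r. HS_M M q r E * ennreal ((2*r) powr t))"

definition HS_P :: "'a::metric_space measure \<Rightarrow> real \<Rightarrow> real \<Rightarrow> 'a set \<Rightarrow> ennreal" where
  "HS_P M q t E = (INF F\<in>{F::nat \<Rightarrow> 'a set. E \<subseteq> (\<Union>i. F i) \<and> (\<forall>i. bounded (F i))}.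
       (\<Sum>i. HS_C M q t (F i)))"

definition HS_dim :: "'a::metric_space measure \<Rightarrow> real \<Rightarrow> 'a set \<Rightarrow> ereal" where
  "HS_dim M q E = (THE t::ereal. \<forall>s::real.
       (ereal s < t \<longrightarrow> HS_P M q s E = \<infinity>) \<and> (t < ereal s \<longrightarrow> HS_P M q s E = 0))"

definition centred_delta_packings :: "'a::metric_space set \<Rightarrow> real \<Rightarrow> ('a set \<times> ('a \<Rightarrow> real)) set" where
  "centred_delta_packings E \<delta> =
     {(S, r). S \<subseteq> E \<and> (\<forall>x\<in>S. 0 < r x \<and> r x \<le> \<delta>) \<and>
        (\<forall>x\<in>S. \<forall>y\<in>S. x \<noteq> y \<longrightarrow> cball x (r x) \<inter> cball y (r y) = {})}"

definition Olsen_Pbar :: "'a::metric_space measure \<Rightarrow> real \<Rightarrow> real \<Rightarrow> 'a set \<Rightarrow> ennreal" where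
  "Olsen_Pbar M q t E = (INF \<delta>\<in>{0<..}. SUP (S, r)\<in>centred_delta_packings E \<delta>.
       (\<Sum>\<^sub>\<infinity>x\<in>S. ennreal (measure M (cball x (r x)) powr q * (2 * r x) powr t)))"

definition Olsen_P :: "'a::metric_space measure \<Rightarrow> real \<Rightarrow> real \<Rightarrow> 'a set \<Rightarrow> ennreal" where
  "Olsen_P M q t E = (INF F\<in>{F::nat \<Rightarrow> 'a set. E \<subseteq> (\<Union>i. F i)}. (\<Sum>i. Olsen_Pbar M q t (F i)))"

definition Olsen_Dim :: "'a::metric_space measure \<Rightarrow> real \<Rightarrow> 'a set \<Rightarrow> ereal" where
  "Olsen_Dim M q E = (INF t\<in>{t::real. Olsen_P M q t E = 0}. ereal t)"

end

theory Submission
  imports Defs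
begin

lemma small_powr:
  fixes d c :: real
  assumes "d > 0" "c > 0"
  shows "\<exists>b>0. \<forall>r. 0 < r \<longrightarrow> r < b \<longrightarrow> (2*r) powr d < c"
proof (intro exI[of _ "c powr (1/d) / 2"] conjI allI impI)
  show "0 < c powr (1/d) / 2" using assms by simp
  fix r :: real assume r: "0 < r" "r < c powr (1/d) / 2"
  have "(2*r) powr d < (c powr (1/d)) powr d"
    using r assms by (intro powr_less_mono2) auto
  also have "\<dots> = c" using assms by (simp add: powr_powr)
  finally show "(2*r) powr d < c" .
qed

lemma threshold_exists:
  fixes P :: "real \<Rightarrow> ennreal"
  assumes mono: "\<And>s s'. P s < top \<Longrightarrow> s < s' \<Longrightarrow> P s' = 0"
  shows "\<exists>!t::ereal. \<forall>s::real. (ereal s < t \<longrightarrow> P s = \<infinity>) \<and> (t < ereal s \<longrightarrow> P s = 0)"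
proof
  define t0 where "t0 = (INF s\<in>{s. P s = 0}. ereal s)"
  show "\<forall>s::real. (ereal s < t0 \<longrightarrow> P s = \<infinity>) \<and> (t0 < ereal s \<longrightarrow> P s = 0)"
  proof (intro allI conjI impI)
    fix s assume s: "ereal s < t0"
    show "P s = \<infinity>"
    proof (rule ccontr)
      assume "P s \<noteq> \<infinity>"
      hence "P s < top" by (simp add: top.not_eq_extremum)
      obtain z where z: "ereal s < ereal z" "ereal z < t0" using ereal_dense2[OF s] by blast
      have "P z = 0" using mono[OF \<open>P s < top\<close>] z by simp
      hence "t0 \<le> ereal z" unfolding t0_def by (intro INF_lower2[of z]) auto
      with z show False by simp
    qed
  next
    fix s assume s: "t0 < ereal s"
    then obtain s0 where s0: "P s0 = 0" "ereal s0 < ereal s" unfolding t0_def by (auto simp: INF_less_iff)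
    show "P s = 0" using mono[of s0 s] s0 by simp
  qed
next
  fix t assume t: "\<forall>s::real. (ereal s < t \<longrightarrow> P s = \<infinity>) \<and> (t < ereal s \<longrightarrow> P s = 0)"
  define t0 where "t0 = (INF s\<in>{s. P s = 0}. ereal s)"
  have A: "\<forall>s::real. (ereal s < t0 \<longrightarrow> P s = \<infinity>) \<and> (t0 < ereal s \<longrightarrow> P s = 0)"
  proof (intro allI conjI impI)
    fix s assume s: "ereal s < t0"
    show "P s = \<infinity>"
    proof (rule ccontr)
      assume "P s \<noteq> \<infinity>"
      hence "P s < top" by (simp add: top.not_eq_extremum)
      obtain z where z: "ereal s < ereal z" "ereal z < t0" using ereal_dense2[OF s] by blast
      have "P z = 0" using mono[OF \<open>P s < top\<close>] z by simp
      hence "t0 \<le> ereal z" unfolding t0_def by (intro INF_lower2[of z]) auto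
      with z show False by simp
    qed
  next
    fix s assume s: "t0 < ereal s"
    then obtain s0 where s0: "P s0 = 0" "ereal s0 < ereal s" unfolding t0_def by (auto simp: INF_less_iff)
    show "P s = 0" using mono[of s0 s] s0 by simp
  qed
  show "t = t0"
  proof (rule ccontr)
    assume "t \<noteq> t0"
    hence "t < t0 \<or> t0 < t" by auto
    thus False
    proof
      assume "t < t0"
      then obtain z where "t < ereal z" "ereal z < t0" using ereal_dense2 by blast
      thus False using t A by fastforce
    next
      assume "t0 < t"
      then obtain z where "t0 < ereal z" "ereal z < t" using ereal_dense2 by blast
      thus False using t A by fastforce
    qed
  qed
qed


lemma HS_M_ge:
  assumes "finite T" "T \<in> centred_r_packings F r"
  shows "ennreal (\<Sum>x\<in>T. measure M (cball x r) powr q) \<le> HS_M M q r F"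
  unfolding HS_M_def
  by (rule SUP_upper2[of T]) (use assms in auto)

lemma HS_M_mono: "G \<subseteq> F \<Longrightarrow> HS_M M q r G \<le> HS_M M q r F"
  unfolding HS_M_def centred_r_packings_def
  by (rule SUP_subset_mono) auto

lemma HS_C_mono: "G \<subseteq> F \<Longrightarrow> HS_C M q t G \<le> HS_C M q t F"
  unfolding HS_C_def
  by (intro Limsup_mono always_eventually allI mult_right_mono HS_M_mono) auto

lemma Pbar_mono: "G \<subseteq> F \<Longrightarrow> Olsen_Pbar M q t G \<le> Olsen_Pbar M q t F"
  unfolding Olsen_Pbar_def
  by (intro INF_mono bexI[of _ "_"] order.refl SUP_subset_mono) (auto simp: centred_delta_packings_def)

lemma HS_C_le_Pbar: "HS_C M q t F \<le> Olsen_Pbar M q t F"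
  unfolding Olsen_Pbar_def
proof (rule INF_greatest)
  fix \<delta> :: real assume "\<delta> \<in> {0<..}"
  hence d: "\<delta> > 0" by simp
  let ?S = "SUP (S, r)\<in>centred_delta_packings F \<delta>.
       (\<Sum>\<^sub>\<infinity>x\<in>S. ennreal (measure M (cball x (r x)) powr q * (2 * r x) powr t))"
  have "\<forall>\<^sub>F r in at_right 0. HS_M M q r F * ennreal ((2*r) powr t) \<le> ?S"
    unfolding eventually_at_right_field
  proof (intro exI[of _ \<delta>] conjI allI impI)
    show "0 < \<delta>" by (rule d)
    fix r :: real assume r: "0 < r" "r < \<delta>"
    show "HS_M M q r F * ennreal ((2*r) powr t) \<le> ?S"
      unfolding HS_M_def SUP_mult_right_ennreal
    proof (rule SUP_least)
      fix S assume S: "S \<in> centred_r_packings F r"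
      have "(\<Sum>\<^sub>\<infinity>x\<in>S. ennreal (measure M (cball x r) powr q)) * ennreal ((2*r) powr t)
          = (\<Sum>\<^sub>\<infinity>x\<in>S. ennreal (measure M (cball x r) powr q) * ennreal ((2*r) powr t))"
        by (simp add: nonneg_infsum_complete SUP_mult_right_ennreal sum_distrib_right del: sum_ennreal)
      also have "\<dots> = (\<Sum>\<^sub>\<infinity>x\<in>S. ennreal (measure M (cball x ((\<lambda>_. r) x)) powr q * (2 * (\<lambda>_. r) x) powr t))"
        by (simp add: ennreal_mult)
      also have "\<dots> \<le> ?S"
        by (rule SUP_upper2[of "(S, \<lambda>_. r)"]) (use S r in \<open>auto simp: centred_delta_packings_def centred_r_packings_def\<close>)
      finally show "(\<Sum>\<^sub>\<infinity>x\<in>S. ennreal (measure M (cball x r) powr q)) * ennreal ((2*r) powr t) \<le> ?S" .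
    qed
  qed
  thus "HS_C M q t F \<le> ?S" unfolding HS_C_def by (rule Limsup_bounded)
qed

lemma HS_C_zero:
  assumes fin: "HS_C M q s F < top" and ss: "s < s'"
  shows "HS_C M q s' F = 0"
proof -
  obtain n where n: "HS_C M q s F < of_nat n" using ennreal_Ex_less_of_nat[OF fin] by blast
  have ev: "\<forall>\<^sub>F r in at_right 0. HS_M M q r F * ennreal ((2*r) powr s) < of_nat n"
    using Limsup_lessD[OF n[unfolded HS_C_def]] .
  have "HS_C M q s' F \<le> 0"
  proof (rule ennreal_le_epsilon)
    fix e :: real assume e: "0 < e"
    obtain b where b: "b > 0" "\<forall>r. 0 < r \<longrightarrow> r < b \<longrightarrow> (2*r) powr (s'-s) < e / (real n + 1)"
      using small_powr[of "s'-s" "e / (real n + 1)"] ss e by auto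
    have ev2: "\<forall>\<^sub>F r in at_right 0. 0 < r \<and> r < b"
      unfolding eventually_at_right_field using b by auto
    from ev ev2 have "\<forall>\<^sub>F r in at_right 0. HS_M M q r F * ennreal ((2*r) powr s') \<le> ennreal e"
    proof eventually_elim
      case (elim r)
      have p: "(2*r) powr s' = (2*r) powr s * (2*r) powr (s'-s)"
        by (simp flip: powr_add)
      have "HS_M M q r F * ennreal ((2*r) powr s') =
            (HS_M M q r F * ennreal ((2*r) powr s)) * ennreal ((2*r) powr (s'-s))"
        by (simp add: p ennreal_mult mult.assoc)
      also have "\<dots> \<le> of_nat n * ennreal (e / (real n + 1))"
      proof (rule mult_mono)
        show "HS_M M q r F * ennreal ((2 * r) powr s) \<le> of_nat n" using elim by simp
        show "ennreal ((2 * r) powr (s' - s)) \<le> ennreal (e / (real n + 1))"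
          using elim b by (intro ennreal_leI) auto
      qed auto
      also have "\<dots> = ennreal (real n * (e / (real n + 1)))"
        using e by (simp add: ennreal_mult[symmetric] ennreal_of_nat_eq_real_of_nat)
      also have "\<dots> \<le> ennreal e"
        using e by (intro ennreal_leI) (simp add: field_simps)
      finally show ?case .
    qed
    hence "HS_C M q s' F \<le> ennreal e" unfolding HS_C_def by (rule Limsup_bounded)
    thus "HS_C M q s' F \<le> 0 + ennreal e" by simp
  qed
  thus ?thesis by simp
qed


lemma HS_P_zero:
  assumes fin: "HS_P M q s E < top" and ss: "s < s'"
  shows "HS_P M q s' E = 0"
proof -
  obtain F where F: "E \<subseteq> (\<Union>i. F i)" "\<forall>i. bounded (F i)" "(\<Sum>i. HS_C M q s (F i)) < top"
    using fin unfolding HS_P_def by (auto simp: INF_less_iff)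
  have z: "\<And>i. HS_C M q s' (F i) = 0"
    using HS_C_zero[OF ennreal_suminf_lessD[OF F(3)] ss] by blast
  have "HS_P M q s' E \<le> (\<Sum>i. HS_C M q s' (F i))"
    unfolding HS_P_def by (rule INF_lower) (use F in auto)
  thus ?thesis by (simp add: z)
qed

lemma HS_dim_prop:
  shows "ereal s < HS_dim M q E \<Longrightarrow> HS_P M q s E = \<infinity>"
    and "HS_dim M q E < ereal s \<Longrightarrow> HS_P M q s E = 0"
proof -
  have "\<forall>s::real. (ereal s < HS_dim M q E \<longrightarrow> HS_P M q s E = \<infinity>) \<and> (HS_dim M q E < ereal s \<longrightarrow> HS_P M q s E = 0)"
    unfolding HS_dim_def by (rule theI'[OF threshold_exists]) (rule HS_P_zero)
  thus "ereal s < HS_dim M q E \<Longrightarrow> HS_P M q s E = \<infinity>"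
    and "HS_dim M q E < ereal s \<Longrightarrow> HS_P M q s E = 0" by auto
qed

lemma dyadic:
  fixes r \<delta> :: real
  assumes "0 < r" "r \<le> \<delta>"
  shows "\<delta> * (1/2)^(Suc (nat \<lfloor>log 2 (\<delta>/r)\<rfloor>)) < r \<and> r \<le> \<delta> * (1/2)^(nat \<lfloor>log 2 (\<delta>/r)\<rfloor>)"
proof -
  define L where "L = log 2 (\<delta>/r)"
  have q1: "\<delta>/r \<ge> 1" using assms by simp
  have L0: "L \<ge> 0" unfolding L_def using q1 by simp
  define k where "k = nat \<lfloor>L\<rfloor>"
  have kr: "real k = of_int \<lfloor>L\<rfloor>" unfolding k_def using L0 by simp
  have k1: "real k \<le> L" "L < real k + 1" using kr by linarith+
  have pL: "2 powr L = \<delta>/r" unfolding L_def using q1 by (intro powr_log_cancel) auto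
  have "2 powr real k \<le> 2 powr L" using k1 by (intro powr_mono) auto
  hence a: "2^k \<le> \<delta>/r" by (simp only: pL powr_realpow)
  have "2 powr L < 2 powr (real k + 1)" using k1 by (intro powr_less_mono) auto
  hence "\<delta>/r < 2 powr (real (Suc k))" by (simp only: pL of_nat_Suc add.commute)
  hence b: "\<delta>/r < 2^(Suc k)" by (simp only: powr_realpow)
  have c1: "r \<le> \<delta> / 2^k" using a assms by (simp add: pos_le_divide_eq pos_divide_le_eq mult.commute)
  have c2: "\<delta> / 2^(Suc k) < r" using b assms by (simp add: pos_divide_less_eq pos_less_divide_eq mult.commute del: power_Suc)
  have e: "\<And>j. \<delta> * (1/2)^j = \<delta> / 2^j" by (simp add: power_one_over)
  show ?thesis unfolding k_def[symmetric] L_def[symmetric] e using c1 c2 by blast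
qed

lemma meas_bound:
  fixes m1 m2 c q :: real
  assumes "0 < m1" "m1 \<le> m2" "m2 \<le> c*m1" "c \<ge> 1"
  shows "m2 powr q \<le> c powr \<bar>q\<bar> * m1 powr q"
proof (cases "q \<ge> 0")
  case True
  have "m2 powr q \<le> (c*m1) powr q" using assms True by (intro powr_mono2) auto
  also have "\<dots> = c powr \<bar>q\<bar> * m1 powr q" using assms True by (simp add: powr_mult)
  finally show ?thesis .
next
  case False
  have "m2 powr q \<le> m1 powr q" using assms False by (intro powr_mono2') auto
  also have "\<dots> \<le> c powr \<bar>q\<bar> * m1 powr q"
  proof -
    have "1 \<le> c powr \<bar>q\<bar>" using assms by (intro ge_one_powr_ge_zero) auto
    moreover have "0 \<le> m1 powr q" by simp
    ultimately show ?thesis by (metis mult_le_cancel_right1 not_less)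
  qed
  finally show ?thesis .
qed

lemma rad_bound:
  fixes a y t :: real
  assumes "0 < a" "a \<le> y" "y \<le> 2*a"
  shows "y powr t \<le> 2 powr \<bar>t\<bar> * a powr t"
proof (cases "t \<ge> 0")
  case True
  have "y powr t \<le> (2*a) powr t" using assms True by (intro powr_mono2) auto
  also have "\<dots> = 2 powr \<bar>t\<bar> * a powr t" using assms True by (simp add: powr_mult)
  finally show ?thesis .
next
  case False
  have "y powr t \<le> a powr t" using assms False by (intro powr_mono2') auto
  also have "\<dots> \<le> 2 powr \<bar>t\<bar> * a powr t"
  proof -
    have "1 \<le> 2 powr \<bar>t\<bar>" by (intro ge_one_powr_ge_zero) auto
    moreover have "0 \<le> a powr t" by simp
    ultimately show ?thesis by (metis mult_le_cancel_right1 not_less)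
  qed
  finally show ?thesis .
qed

lemma geo_powr:
  fixes \<delta> \<epsilon> :: real
  assumes "0 < \<delta>"
  shows "(\<delta> * (1/2)^k) powr \<epsilon> = \<delta> powr \<epsilon> * ((1/2) powr \<epsilon>)^k"
proof -
  have "((1/2::real)^k) powr \<epsilon> = ((1/2) powr real k) powr \<epsilon>" by (simp add: powr_realpow)
  also have "\<dots> = ((1/2) powr \<epsilon>)^k" by (simp add: powr_powr powr_power mult.commute)
  finally show ?thesis using assms by (simp add: powr_mult)
qed

lemma cball_pos:
  fixes M :: "'a::metric_space measure"
  assumes fm: "finite_measure M" and sets: "sets M = sets borel"
    and x: "x \<in> msupp M" and r: "0 < r"
  shows "0 < measure M (cball x r)"
proof -
  have "0 < measure M (ball x r)" using x r unfolding msupp_def by auto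
  also have "\<dots> \<le> measure M (cball x r)"
    by (rule finite_measure.finite_measure_mono[OF fm]) (auto simp: sets)
  finally show ?thesis .
qed

lemma cball_mono_meas:
  fixes M :: "'a::metric_space measure"
  assumes fm: "finite_measure M" and sets: "sets M = sets borel" and "r \<le> r'"
  shows "measure M (cball x r) \<le> measure M (cball x r')"
  by (rule finite_measure.finite_measure_mono[OF fm]) (use assms in \<open>auto simp: sets\<close>)

lemma main_bound:
  fixes M :: "'a::metric_space measure"
  assumes fm: "finite_measure M" and sets: "sets M = sets borel"
    and c: "c \<ge> 1" and r0: "r0 > 0"
    and dbl: "\<forall>x\<in>msupp M. \<forall>r. 0 < r \<longrightarrow> r < r0 \<longrightarrow> measure M (cball x (2*r)) \<le> c * measure M (cball x r)"
    and FS: "F \<subseteq> msupp M" and fin: "HS_C M q t F < top" and eps: "\<epsilon> > 0"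
  shows "Olsen_Pbar M q (t+\<epsilon>) F = 0"
proof -
  let ?\<mu> = "\<lambda>x r. measure M (cball x r)"
  obtain n where n: "HS_C M q t F < of_nat n" using ennreal_Ex_less_of_nat[OF fin] by blast
  define K where "K = real n"
  have K0: "K \<ge> 0" unfolding K_def by simp
  have "\<forall>\<^sub>F r in at_right 0. HS_M M q r F * ennreal ((2*r) powr t) < of_nat n"
    using Limsup_lessD[OF n[unfolded HS_C_def]] .
  then obtain b where b: "b > 0" "\<And>r. 0 < r \<Longrightarrow> r < b \<Longrightarrow> HS_M M q r F * ennreal ((2*r) powr t) < of_nat n"
    unfolding eventually_at_right_field by auto
  have packK: "(\<Sum>x\<in>T. ?\<mu> x r powr q) * (2*r) powr t \<le> K"
    if "0 < r" "r < b" "finite T" "T \<in> centred_r_packings F r" for r T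
  proof -
    have "ennreal ((\<Sum>x\<in>T. ?\<mu> x r powr q) * (2*r) powr t)
        = ennreal (\<Sum>x\<in>T. ?\<mu> x r powr q) * ennreal ((2*r) powr t)"
      by (intro ennreal_mult) (auto intro: sum_nonneg)
    also have "\<dots> \<le> HS_M M q r F * ennreal ((2*r) powr t)"
      by (intro mult_right_mono HS_M_ge that) auto
    also have "\<dots> < ennreal K" using b(2)[OF that(1,2)] by (simp add: K_def ennreal_of_nat_eq_real_of_nat)
    finally have "ennreal ((\<Sum>x\<in>T. ?\<mu> x r powr q) * (2*r) powr t) < ennreal K" .
    thus ?thesis using K0 by (subst (asm) ennreal_less_iff) (auto intro!: mult_nonneg_nonneg sum_nonneg)
  qed
  define g :: real where "g = (1/2) powr \<epsilon>"
  have g0: "0 < g" unfolding g_def by simp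
  have g1: "g < 1" unfolding g_def using powr_less_mono2[of \<epsilon> "1/2" 1] eps by simp
  define B0 where "B0 = c powr \<bar>q\<bar> * 2 powr \<bar>t\<bar>"
  have B00: "B0 \<ge> 0" unfolding B0_def by simp
  define A where "A = B0 * K / (1 - g)"
  have A0: "A \<ge> 0" unfolding A_def using B00 K0 g1 by simp
  define \<delta>0 where "\<delta>0 = min r0 b / 2"
  have d00: "\<delta>0 > 0" "\<delta>0 < r0" "\<delta>0 < b" unfolding \<delta>0_def using r0 b by auto
  have key: "(\<Sum>x\<in>T. ?\<mu> x (\<rho> x) powr q * (2 * \<rho> x) powr (t+\<epsilon>)) \<le> A * (2*\<delta>) powr \<epsilon>"
    if d: "0 < \<delta>" "\<delta> \<le> \<delta>0" and S: "(S, \<rho>) \<in> centred_delta_packings F \<delta>"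
      and T: "finite T" "T \<subseteq> S" for \<delta> S \<rho> T
  proof -
    define kx where "kx x = nat \<lfloor>log 2 (\<delta> / \<rho> x)\<rfloor>" for x
    define \<rho>k where "\<rho>k k = \<delta> * (1/2)^(Suc k)" for k
    have S': "S \<subseteq> F" "\<And>x. x \<in> S \<Longrightarrow> 0 < \<rho> x \<and> \<rho> x \<le> \<delta>"
      "\<And>x y. x \<in> S \<Longrightarrow> y \<in> S \<Longrightarrow> x \<noteq> y \<Longrightarrow> cball x (\<rho> x) \<inter> cball y (\<rho> y) = {}"
      using S unfolding centred_delta_packings_def by auto
    have \<rho>k0: "0 < \<rho>k k" for k unfolding \<rho>k_def using d by simp
    have scale: "\<rho>k (kx x) < \<rho> x \<and> \<rho> x \<le> 2 * \<rho>k (kx x)" if "x \<in> S" for x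
      using dyadic[of "\<rho> x" \<delta>] S'(2)[OF that] unfolding kx_def \<rho>k_def by simp
    define a where "a x k = ?\<mu> x (\<rho>k k) powr q * (2 * \<rho>k k) powr t" for x k
    have tbound: "?\<mu> x (\<rho> x) powr q * (2 * \<rho> x) powr (t+\<epsilon>) \<le> B0 * (2*\<delta>) powr \<epsilon> * K0' * g^(kx x) * a x (kx x)"
      if "x \<in> T" and "K0' = (1::real)" for x K0'
    proof -
      have xS: "x \<in> S" using that T by auto
      have xF: "x \<in> msupp M" using xS S'(1) FS by auto
      let ?k = "kx x"
      let ?r = "\<rho>k ?k"
      have sc: "?r < \<rho> x" "\<rho> x \<le> 2 * ?r" using scale[OF xS] by auto
      have rr0: "?r < r0" using sc S'(2)[OF xS] d d00 by linarith
      have m1: "0 < ?\<mu> x ?r" by (rule cball_pos[OF fm sets xF \<rho>k0])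
      have m12: "?\<mu> x ?r \<le> ?\<mu> x (\<rho> x)" using sc by (intro cball_mono_meas[OF fm sets]) auto
      have m23: "?\<mu> x (\<rho> x) \<le> c * ?\<mu> x ?r"
        using cball_mono_meas[OF fm sets sc(2), of x] dbl xF \<rho>k0[of ?k] rr0 by fastforce
      have i1: "?\<mu> x (\<rho> x) powr q \<le> c powr \<bar>q\<bar> * ?\<mu> x ?r powr q"
        by (rule meas_bound[OF m1 m12 m23 c])
      have i2: "(2 * \<rho> x) powr t \<le> 2 powr \<bar>t\<bar> * (2 * ?r) powr t"
        using sc \<rho>k0[of ?k] by (intro rad_bound) auto
      have "2 * \<rho> x \<le> (2*\<delta>) * (1/2)^?k" using sc unfolding \<rho>k_def by simp
      hence "(2 * \<rho> x) powr \<epsilon> \<le> ((2*\<delta>) * (1/2)^?k) powr \<epsilon>"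
        using S'(2)[OF xS] eps by (intro powr_mono2) auto
      also have "\<dots> = (2*\<delta>) powr \<epsilon> * g^?k" unfolding g_def using d by (intro geo_powr) auto
      finally have i3: "(2 * \<rho> x) powr \<epsilon> \<le> (2*\<delta>) powr \<epsilon> * g^?k" .
      have "?\<mu> x (\<rho> x) powr q * (2 * \<rho> x) powr (t+\<epsilon>)
          = ?\<mu> x (\<rho> x) powr q * ((2 * \<rho> x) powr t * (2 * \<rho> x) powr \<epsilon>)"
        by (simp add: powr_add)
      also have "\<dots> \<le> (c powr \<bar>q\<bar> * ?\<mu> x ?r powr q) * ((2 powr \<bar>t\<bar> * (2 * ?r) powr t) * ((2*\<delta>) powr \<epsilon> * g^?k))"
        using i1 i2 i3 by (intro mult_mono) auto
      also have "\<dots> = B0 * (2*\<delta>) powr \<epsilon> * K0' * g^?k * a x ?k"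
        unfolding B0_def a_def that(2) by (simp add: algebra_simps)
      finally show ?thesis .
    qed
    define h where "h x = B0 * (2*\<delta>) powr \<epsilon> * g^(kx x) * a x (kx x)" for x
    have "(\<Sum>x\<in>T. ?\<mu> x (\<rho> x) powr q * (2 * \<rho> x) powr (t+\<epsilon>)) \<le> (\<Sum>x\<in>T. h x)"
      using tbound[of _ 1] unfolding h_def by (intro sum_mono) auto
    also have "\<dots> = (\<Sum>k\<in>kx ` T. \<Sum>x\<in>{x\<in>T. kx x = k}. h x)"
      by (rule sum.image_gen[OF T(1)])
    also have "\<dots> \<le> (\<Sum>k\<in>kx ` T. B0 * (2*\<delta>) powr \<epsilon> * K * g^k)"
    proof (rule sum_mono)
      fix k assume "k \<in> kx ` T"
      let ?Tk = "{x\<in>T. kx x = k}"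
      have "(\<Sum>x\<in>?Tk. h x) = B0 * (2*\<delta>) powr \<epsilon> * g^k * (\<Sum>x\<in>?Tk. a x k)"
        unfolding h_def by (simp add: sum_distrib_left)
      also have "(\<Sum>x\<in>?Tk. a x k) = (\<Sum>x\<in>?Tk. ?\<mu> x (\<rho>k k) powr q) * (2 * \<rho>k k) powr t"
        unfolding a_def by (simp add: sum_distrib_right)
      also have "\<dots> \<le> K"
      proof (rule packK)
        show "0 < \<rho>k k" by (rule \<rho>k0)
        have "\<rho>k k < \<delta>" unfolding \<rho>k_def using d
          using power_le_one[of "1/2::real" k] by (simp add: mult_less_cancel_left1)
        thus "\<rho>k k < b" using d d00 by linarith
        show "finite ?Tk" using T by simp
        show "?Tk \<in> centred_r_packings F (\<rho>k k)"
          unfolding centred_r_packings_def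
        proof (intro CollectI conjI ballI impI)
          show "?Tk \<subseteq> F" using T S'(1) by auto
          fix x y assume xy: "x \<in> ?Tk" "y \<in> ?Tk" "x \<noteq> y"
          have xS: "x \<in> S" and yS: "y \<in> S" using xy T by auto
          have "cball x (\<rho>k k) \<subseteq> cball x (\<rho> x)" using scale[OF xS] xy by auto
          moreover have "cball y (\<rho>k k) \<subseteq> cball y (\<rho> y)" using scale[OF yS] xy by auto
          ultimately show "cball x (\<rho>k k) \<inter> cball y (\<rho>k k) = {}" using S'(3)[OF xS yS xy(3)] by blast
        qed
      qed
      hence "B0 * (2*\<delta>) powr \<epsilon> * g^k * ((\<Sum>x\<in>?Tk. ?\<mu> x (\<rho>k k) powr q) * (2 * \<rho>k k) powr t)
           \<le> B0 * (2*\<delta>) powr \<epsilon> * g^k * K"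
        using B00 g0 by (intro mult_left_mono) auto
      finally show "(\<Sum>x\<in>?Tk. h x) \<le> B0 * (2*\<delta>) powr \<epsilon> * K * g^k" by (simp add: mult_ac)
    qed
    also have "\<dots> = B0 * (2*\<delta>) powr \<epsilon> * K * (\<Sum>k\<in>kx ` T. g^k)"
      by (simp add: sum_distrib_left)
    also have "\<dots> \<le> B0 * (2*\<delta>) powr \<epsilon> * K * (1 / (1 - g))"
    proof (rule mult_left_mono)
      have "(\<Sum>k\<in>kx ` T. g^k) \<le> (\<Sum>k. g^k)"
        using g0 g1 T by (intro sum_le_suminf summable_geometric) auto
      also have "\<dots> = 1 / (1 - g)" using g0 g1 by (intro suminf_geometric) auto
      finally show "(\<Sum>k\<in>kx ` T. g^k) \<le> 1 / (1 - g)" .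
      show "0 \<le> B0 * (2*\<delta>) powr \<epsilon> * K" using B00 K0 by simp
    qed
    also have "\<dots> = A * (2*\<delta>) powr \<epsilon>" unfolding A_def by simp
    finally show ?thesis .
  qed
  have supb: "Olsen_Pbar M q (t+\<epsilon>) F \<le> ennreal (A * (2*\<delta>) powr \<epsilon>)"
    if d: "0 < \<delta>" "\<delta> \<le> \<delta>0" for \<delta>
    unfolding Olsen_Pbar_def
  proof (rule INF_lower2[of \<delta>])
    show "\<delta> \<in> {0<..}" using d by simp
    show "(SUP (S, r)\<in>centred_delta_packings F \<delta>.
       (\<Sum>\<^sub>\<infinity>x\<in>S. ennreal (measure M (cball x (r x)) powr q * (2 * r x) powr (t+\<epsilon>))))
       \<le> ennreal (A * (2*\<delta>) powr \<epsilon>)"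
    proof (rule SUP_least, clarify)
      fix S \<rho> assume S: "(S, \<rho>) \<in> centred_delta_packings F \<delta>"
      show "(\<Sum>\<^sub>\<infinity>x\<in>S. ennreal (measure M (cball x (\<rho> x)) powr q * (2 * \<rho> x) powr (t+\<epsilon>)))
         \<le> ennreal (A * (2*\<delta>) powr \<epsilon>)"
        unfolding nonneg_infsum_complete[OF zero_le]
      proof (rule SUP_least, clarify)
        fix T assume T: "finite T" "T \<subseteq> S"
        have "(\<Sum>x\<in>T. ennreal (measure M (cball x (\<rho> x)) powr q * (2 * \<rho> x) powr (t+\<epsilon>)))
            = ennreal (\<Sum>x\<in>T. measure M (cball x (\<rho> x)) powr q * (2 * \<rho> x) powr (t+\<epsilon>))"
          by (intro sum_ennreal) auto
        also have "\<dots> \<le> ennreal (A * (2*\<delta>) powr \<epsilon>)"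
          by (intro ennreal_leI key[OF d S T])
        finally show "(\<Sum>x\<in>T. ennreal (measure M (cball x (\<rho> x)) powr q * (2 * \<rho> x) powr (t+\<epsilon>)))
            \<le> ennreal (A * (2*\<delta>) powr \<epsilon>)" .
      qed
    qed
  qed
  have "Olsen_Pbar M q (t+\<epsilon>) F \<le> 0"
  proof (rule ennreal_le_epsilon)
    fix e :: real assume e: "0 < e"
    obtain b' where b': "b' > 0" "\<forall>r. 0 < r \<longrightarrow> r < b' \<longrightarrow> (2*r) powr \<epsilon> < e / (A + 1)"
      using small_powr[of \<epsilon> "e / (A+1)"] eps e A0 by auto
    define \<delta> where "\<delta> = min \<delta>0 (b'/2)"
    have d: "0 < \<delta>" "\<delta> \<le> \<delta>0" "\<delta> < b'" unfolding \<delta>_def using d00 b' by auto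
    have p: "(2*\<delta>) powr \<epsilon> < e / (A+1)" using b'(2) d by auto
    have "A * (2*\<delta>) powr \<epsilon> \<le> (A+1) * (2*\<delta>) powr \<epsilon>" by (simp add: algebra_simps)
    also have "\<dots> \<le> (A+1) * (e / (A+1))" using p A0 by (intro mult_left_mono) auto
    also have "\<dots> = e" using A0 by simp
    finally have "A * (2*\<delta>) powr \<epsilon> \<le> e" .
    hence "ennreal (A * (2*\<delta>) powr \<epsilon>) \<le> ennreal e" by (rule ennreal_leI)
    with supb[OF d(1,2)] show "Olsen_Pbar M q (t+\<epsilon>) F \<le> 0 + ennreal e" by simp
  qed
  thus ?thesis by simp
qed

theorem proposition2p7:
  fixes M :: "'a::euclidean_space measure" and q :: real and E :: "'a set"
  assumes "sets M = sets borel"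
    and "prob_space M"
    and "compact (msupp M)"
    and "doubling M"
    and "E \<subseteq> msupp M"
  shows "HS_dim M q E = Olsen_Dim M q E"
proof -
  have fm: "finite_measure M" using assms(2) unfolding prob_space_def by auto
  have sets: "sets M = sets borel" by (rule assms(1))
  have bE: "bounded E" using compact_imp_bounded[OF assms(3)] assms(5) bounded_subset by blast
  obtain c r0 where c: "c \<ge> 1" and r0: "r0 > 0"
    and dbl: "\<forall>x\<in>msupp M. \<forall>r. 0 < r \<longrightarrow> r < r0 \<longrightarrow> measure M (cball x (2*r)) \<le> c * measure M (cball x r)"
  proof -
    let ?f = "\<lambda>r. SUP x\<in>msupp M. ereal (measure M (cball x (2*r)) / measure M (cball x r))"
    have "Limsup (at_right (0::real)) ?f \<noteq> \<infinity>" using assms(4) unfolding doubling_def by auto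
    then obtain N where N: "Limsup (at_right (0::real)) ?f < ereal (real N)"
      using less_PInf_Ex_of_nat by blast
    from Limsup_lessD[OF N] obtain b where b: "b > 0" "\<And>r. 0 < r \<Longrightarrow> r < b \<Longrightarrow> ?f r < ereal (real N)"
      unfolding eventually_at_right_field by auto
    show ?thesis
    proof (rule that[of "max 1 (real N)" b])
      show "max 1 (real N) \<ge> 1" "b > 0" using b by auto
      show "\<forall>x\<in>msupp M. \<forall>r. 0 < r \<longrightarrow> r < b \<longrightarrow> measure M (cball x (2*r)) \<le> max 1 (real N) * measure M (cball x r)"
      proof (intro ballI allI impI)
        fix x r assume x: "x \<in> msupp M" and r: "0 < r" "r < b"
        have pos: "0 < measure M (cball x r)" by (rule cball_pos[OF fm sets x r(1)])
        have "ereal (measure M (cball x (2*r)) / measure M (cball x r)) \<le> ?f r"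
          using x by (intro SUP_upper)
        also have "\<dots> < ereal (real N)" using b(2)[OF r] .
        finally have "measure M (cball x (2*r)) / measure M (cball x r) < real N" by simp
        hence "measure M (cball x (2*r)) < real N * measure M (cball x r)"
          using pos by (simp add: divide_less_eq)
        also have "\<dots> \<le> max 1 (real N) * measure M (cball x r)"
          using pos by (intro mult_right_mono) auto
        finally show "measure M (cball x (2*r)) \<le> max 1 (real N) * measure M (cball x r)" by simp
      qed
    qed
  qed
  have HS_le: "HS_P M q t E \<le> Olsen_P M q t E" for t
    unfolding Olsen_P_def
  proof (rule INF_greatest)
    fix F assume F: "F \<in> {F::nat \<Rightarrow> 'a set. E \<subseteq> (\<Union>i. F i)}"
    have "HS_P M q t E \<le> (\<Sum>i. HS_C M q t (F i \<inter> E))"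
      unfolding HS_P_def by (rule INF_lower) (use F bE bounded_subset in auto)
    also have "\<dots> \<le> (\<Sum>i. Olsen_Pbar M q t (F i))"
      by (intro suminf_le summableI order.trans[OF HS_C_le_Pbar Pbar_mono]) auto
    finally show "HS_P M q t E \<le> (\<Sum>i. Olsen_Pbar M q t (F i))" .
  qed
  have dir1: "HS_dim M q E \<le> Olsen_Dim M q E"
    unfolding Olsen_Dim_def
  proof (rule INF_greatest)
    fix t assume t: "t \<in> {t. Olsen_P M q t E = 0}"
    hence z: "HS_P M q t E = 0" using HS_le[of t] by simp
    show "HS_dim M q E \<le> ereal t"
    proof (rule ccontr)
      assume "\<not> HS_dim M q E \<le> ereal t"
      hence "ereal t < HS_dim M q E" by simp
      hence "HS_P M q t E = \<infinity>" by (rule HS_dim_prop(1))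
      with z show False by simp
    qed
  qed
  have le_s: "Olsen_Dim M q E \<le> ereal s" if s: "HS_dim M q E < ereal s" for s
  proof -
    obtain s1 where s1: "HS_dim M q E < ereal s1" "ereal s1 < ereal s" using ereal_dense2[OF s] by blast
    have "HS_P M q s1 E = 0" using HS_dim_prop(2)[OF s1(1)] .
    hence "HS_P M q s1 E < top" by simp
    then obtain F where F: "E \<subseteq> (\<Union>i. F i)" "\<forall>i. bounded (F i)" "(\<Sum>i. HS_C M q s1 (F i)) < top"
      unfolding HS_P_def by (auto simp: INF_less_iff)
    have z: "Olsen_Pbar M q s (F i \<inter> E) = 0" for i
    proof -
      have "HS_C M q s1 (F i \<inter> E) \<le> HS_C M q s1 (F i)" by (rule HS_C_mono) auto
      also have "\<dots> < top" by (rule ennreal_suminf_lessD[OF F(3)])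
      finally have fin: "HS_C M q s1 (F i \<inter> E) < top" .
      have "Olsen_Pbar M q (s1 + (s - s1)) (F i \<inter> E) = 0"
        using s1(2) assms(5) by (intro main_bound[OF fm sets c r0 dbl _ fin]) auto
      thus ?thesis by simp
    qed
    have "Olsen_P M q s E \<le> (\<Sum>i. Olsen_Pbar M q s (F i \<inter> E))"
      unfolding Olsen_P_def by (rule INF_lower) (use F in auto)
    hence "Olsen_P M q s E = 0" by (simp add: z)
    thus ?thesis unfolding Olsen_Dim_def by (intro INF_lower) auto
  qed
  have dir2: "Olsen_Dim M q E \<le> HS_dim M q E"
  proof (rule ccontr)
    assume "\<not> Olsen_Dim M q E \<le> HS_dim M q E"
    hence "HS_dim M q E < Olsen_Dim M q E" by simp
    then obtain z where z: "HS_dim M q E < ereal z" "ereal z < Olsen_Dim M q E"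
      using ereal_dense2 by blast
    with le_s[OF z(1)] show False by simp
  qed
  show ?thesis using dir1 dir2 by (rule antisym)
qed


end
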